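(* Let $\mathcal{L}$ be a distributive abstract logic, $T\in Th_{\mathcal{L}}$ a theory and $a\in Expr_{\mathcal{L}}$ with $a\notin T$. Then there is a prime theory $P\in PTh_{\mathcal{L}}$ with $T\subseteq P$ and $a\notin P$.
   Context: An abstract logic is a triple $\mathcal{L}=(Expr_{\mathcal{L}},Th_{\mathcal{L}},\mathcal{C}_{\mathcal{L}})$ where $Expr_{\mathcal{L}}$ is a set, $Th_{\mathcal{L}}$ a non-empty set of subsets of $Expr_{\mathcal{L}}$ (theories) with $\bigcap\mathcal{T}\in Th_{\mathcal{L}}$ for every non-empty $\mathcal{T}\subseteq Th_{\mathcal{L}}$, and $\mathcal{C}_{\mathcal{L}}$ a set of operations on $Expr_{\mathcal{L}}$. $\mathcal{L}$ is closed under union of chains if the union of every non-empty chain of theories is a theory. A theory $T$ is prime if $T=\bigcap\mathcal{T}$ for a non-empty finite $\mathcal{T}\subseteq Th_{\mathcal{L}}$ implies $T\in\mathcal{T}$; totally prime if this holds for every non-empty $\mathcal{T}$ of any cardinality. $PTh_{\mathcal{L}}$, $TPTh_{\mathcal{L}}$ denote the sets of prime and totally prime theories. A distributive abstract logic is an abstract logic closed under union of chains with binary connectives $\vee,\wedge\in\mathcal{C}_{\mathcal{L}}$ such that for all $a,b$ and all $T\in TPTh_{\mathcal{L}}$: $a\vee b\in T$ iff $a\in T$ or $b\in T$; $a\wedge b\in T$ iff $a\in T$ and $b\in T$. *)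

theory Defs
  imports Main
begin

(* The set of
   operations C is only relevant through the connectives \<or>, \<and> below. *)
definition abstract_logic :: "'a set \<Rightarrow> 'a set set \<Rightarrow> bool" where
  "abstract_logic Expr Th \<longleftrightarrow>
     (\<forall>T\<in>Th. T \<subseteq> Expr) \<and> Th \<noteq> {} \<and>
     (\<forall>\<T>. \<T> \<noteq> {} \<and> \<T> \<subseteq> Th \<longrightarrow> \<Inter>\<T> \<in> Th)"

definition closed_union_chains :: "'a set set \<Rightarrow> bool" where
  "closed_union_chains Th \<longleftrightarrow>
     (\<forall>\<C>. \<C> \<noteq> {} \<and> \<C> \<subseteq> Th \<and> Complete_Partial_Order.chain (\<subseteq>) \<C> \<longrightarrow> \<Union>\<C> \<in> Th)"

definition prime_theory :: "'a set set \<Rightarrow> 'a set \<Rightarrow> bool" where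
  "prime_theory Th T \<longleftrightarrow> T \<in> Th \<and>
     (\<forall>\<T>. \<T> \<noteq> {} \<and> finite \<T> \<and> \<T> \<subseteq> Th \<and> T = \<Inter>\<T> \<longrightarrow> T \<in> \<T>)"

definition totally_prime_theory :: "'a set set \<Rightarrow> 'a set \<Rightarrow> bool" where
  "totally_prime_theory Th T \<longleftrightarrow> T \<in> Th \<and>
     (\<forall>\<T>. \<T> \<noteq> {} \<and> \<T> \<subseteq> Th \<and> T = \<Inter>\<T> \<longrightarrow> T \<in> \<T>)"

definition distributive_logic ::
  "'a set \<Rightarrow> 'a set set \<Rightarrow> ('a \<Rightarrow> 'a \<Rightarrow> 'a) \<Rightarrow> ('a \<Rightarrow> 'a \<Rightarrow> 'a) \<Rightarrow> bool" where
  "distributive_logic Expr Th vee wedge \<longleftrightarrow>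
     abstract_logic Expr Th \<and> closed_union_chains Th \<and>
     (\<forall>a\<in>Expr. \<forall>b\<in>Expr. vee a b \<in> Expr \<and> wedge a b \<in> Expr) \<and>
     (\<forall>a\<in>Expr. \<forall>b\<in>Expr. \<forall>T. totally_prime_theory Th T \<longrightarrow>
        ((vee a b \<in> T \<longleftrightarrow> a \<in> T \<or> b \<in> T) \<and> (wedge a b \<in> T \<longleftrightarrow> a \<in> T \<and> b \<in> T)))"

end

theory Submission
  imports Defs
begin

theorem corollary3p3:
  fixes Expr :: "'a set" and Th :: "'a set set" and vee wedge :: "'a \<Rightarrow> 'a \<Rightarrow> 'a"
  assumes "distributive_logic Expr Th vee wedge"
    and "T \<in> Th" and "a \<in> Expr" and "a \<notin> T"
  shows "\<exists>P. prime_theory Th P \<and> T \<subseteq> P \<and> a \<notin> P"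
proof -
  have cu: "closed_union_chains Th" using assms(1) by (simp add: distributive_logic_def)
  define A where "A = {P \<in> Th. T \<subseteq> P \<and> a \<notin> P}"
  have "\<forall>C\<in>chains A. \<exists>U\<in>A. \<forall>X\<in>C. X \<subseteq> U"
  proof
    fix C assume C: "C \<in> chains A"
    show "\<exists>U\<in>A. \<forall>X\<in>C. X \<subseteq> U"
    proof (cases "C = {}")
      case True thus ?thesis using assms(2,4) by (auto simp: A_def)
    next
      case False
      have sub: "C \<subseteq> A" and ch: "chain\<^sub>\<subseteq> C" using C by (auto simp: chains_def)
      have "Complete_Partial_Order.chain (\<subseteq>) C"
        using ch by (auto simp: chain_subset_def Complete_Partial_Order.chain_def)
      hence "\<Union>C \<in> Th" using cu False sub unfolding closed_union_chains_def A_def by blast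
      moreover have "T \<subseteq> \<Union>C" "a \<notin> \<Union>C" using sub False by (auto simp: A_def)
      ultimately show ?thesis by (auto simp: A_def)
    qed
  qed
  from Zorn_Lemma2[OF this] obtain M where M: "M \<in> A" and mx: "\<forall>X\<in>A. M \<subseteq> X \<longrightarrow> X = M" by blast
  have "prime_theory Th M"
    unfolding prime_theory_def
  proof (intro conjI allI impI)
    show "M \<in> Th" using M by (simp add: A_def)
    fix \<T> assume h: "\<T> \<noteq> {} \<and> finite \<T> \<and> \<T> \<subseteq> Th \<and> M = \<Inter>\<T>"
    show "M \<in> \<T>"
    proof (rule ccontr)
      assume n: "M \<notin> \<T>"
      have "\<forall>S\<in>\<T>. a \<in> S"
      proof
        fix S assume S: "S \<in> \<T>"
        have "M \<subseteq> S" using h S by blast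
        moreover have "S \<noteq> M" using S n by blast
        ultimately have "S \<notin> A" using mx by blast
        moreover have "S \<in> Th" "T \<subseteq> S" using S h M \<open>M \<subseteq> S\<close> by (auto simp: A_def)
        ultimately show "a \<in> S" by (auto simp: A_def)
      qed
      hence "a \<in> M" using h by blast
      thus False using M by (simp add: A_def)
    qed
  qed
  thus ?thesis using M by (auto simp: A_def)
qed

end
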